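(* Let $G$ be a finite simple graph on $[d]$, let $k\ge1$, let $<$ be a monomial order on $R[G]$, and let $\{m_1,\dots,m_s\}$ be the set of all standard monomials of degree $k$ with respect to the initial ideal ${\rm in}_<(K_G)$. Each such $m_i$ is of the form $x_{S_1}\cdots x_{S_k}$ with $S_1,\dots,S_k$ pairwise disjoint stable sets, and hence equals ${\bf x}_{f_i}$ for the $k$-coloring $f_i$ of $G[S_1\cup\dots\cup S_k]$ given by $f_i(v)=\ell$ for $v\in S_\ell$. Then the set of those $f_i$ that are $k$-colorings of $G$ itself (i.e. with $S_1\cup\dots\cup S_k=[d]$) is a complete representative system for the set ${\rm kc}(G,k)$ of $k$-Kempe classes of $G$.
   Context: A $k$-coloring of a graph $H$ is a map $f:V(H)\to[k]$ (not necessarily surjective) with $f(u)\neq f(v)$ for every edge $\{u,v\}$. A Kempe switching of a $k$-coloring $f$: choose colors $i<j$ and a connected component $C$ of $H[f^{-1}(i)\cup f^{-1}(j)]$, and interchange $i$ and $j$ on $C$. Two $k$-colorings are Kempe equivalent ($\sim_k$) if one is obtained from the other by a finite sequence of Kempe switchings; ${\rm kc}(H,k)$ is the set of equivalence classes (the $k$-Kempe classes) of the set of $k$-colorings of $H$. Colorings differing only by a permutation of the colors are identified. A stable set of $G$ is a subset of $[d]$ containing no edge (including $\emptyset$ and singletons); $S(G)$ is the set of stable sets; $R[G]=\mathbb{K}[x_S:S\in S(G)]$ over a field $\mathbb{K}$, all variables of degree $1$. For a $k$-coloring $f$ of an induced subgraph $G[W]$, ${\bf x}_f=\prod_{\ell=1}^k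 x_{f^{-1}(\ell)}$. $J_G$ is the ideal generated by all ${\bf x}_f-{\bf x}_g$ with $f,g$ $2$-colorings of a common induced subgraph of $G$; $M_G=\langle x_Sx_T : S,T\in S(G),\ S\cap T\neq\emptyset\rangle$; the Kempe ideal is $K_G=J_G+M_G$. For a monomial order $<$, ${\rm in}_<(I)$ is the ideal generated by the leading monomials of nonzero elements of $I$, and a monomial is standard if it does not lie in ${\rm in}_<(I)$. *)

theory Defs
  imports Main "HOL-Library.Poly_Mapping" "HOL-Combinatorics.Permutations"
begin

definition simple_graph :: "nat \<Rightarrow> nat set set \<Rightarrow> bool" where
  "simple_graph d E \<longleftrightarrow> (\<forall>e\<in>E. \<exists>u v. e = {u, v} \<and> u \<noteq> v \<and> u \<in> {1..d} \<and> v \<in> {1..d})"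

definition stable_sets :: "nat \<Rightarrow> nat set set \<Rightarrow> nat set set" where
  "stable_sets d E = {S. S \<subseteq> {1..d} \<and> (\<forall>e\<in>E. \<not> e \<subseteq> S)}"

text \<open>A k-coloring of the induced subgraph G[W] (values outside W irrelevant).\<close>
definition is_coloring :: "nat set set \<Rightarrow> nat set \<Rightarrow> nat \<Rightarrow> (nat \<Rightarrow> nat) \<Rightarrow> bool" where
  "is_coloring E W k f \<longleftrightarrow> (\<forall>v\<in>W. f v \<in> {1..k}) \<and> (\<forall>u\<in>W. \<forall>v\<in>W. {u, v} \<in> E \<longrightarrow> f u \<noteq> f v)"

definition adj_in :: "nat set set \<Rightarrow> nat set \<Rightarrow> nat \<Rightarrow> nat \<Rightarrow> bool" where
  "adj_in E X u v \<longleftrightarrow> u \<in> X \<and> v \<in> X \<and> {u, v} \<in> E"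

definition is_component :: "nat set set \<Rightarrow> nat set \<Rightarrow> nat set \<Rightarrow> bool" where
  "is_component E X C \<longleftrightarrow> (\<exists>u\<in>X. C = {v. (adj_in E X)\<^sup>*\<^sup>* u v})"

definition swap_colors :: "nat \<Rightarrow> nat \<Rightarrow> nat \<Rightarrow> nat" where
  "swap_colors i j c = (if c = i then j else if c = j then i else c)"

definition kempe_step :: "nat \<Rightarrow> nat set set \<Rightarrow> nat \<Rightarrow> (nat \<Rightarrow> nat) \<Rightarrow> (nat \<Rightarrow> nat) \<Rightarrow> bool" where
  "kempe_step d E k f g \<longleftrightarrow>
     (\<exists>i j C. 1 \<le> i \<and> i < j \<and> j \<le> k \<and>
        is_component E {v\<in>{1..d}. f v = i \<or> f v = j} C \<and>
        g = (\<lambda>v. if v \<in> C then swap_colors i j (f v) else f v))"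

text \<open>Kempe equivalence of k-colorings of G, where colorings differing only by a
  permutation of the colors (and values outside {1..d}) are identified.\<close>
definition kempe_equiv :: "nat \<Rightarrow> nat set set \<Rightarrow> nat \<Rightarrow> (nat \<Rightarrow> nat) \<Rightarrow> (nat \<Rightarrow> nat) \<Rightarrow> bool" where
  "kempe_equiv d E k f g \<longleftrightarrow>
     (\<exists>\<sigma> h. \<sigma> permutes {1..k} \<and> (kempe_step d E k)\<^sup>*\<^sup>* f h \<and> (\<forall>v\<in>{1..d}. h v = \<sigma> (g v)))"

type_synonym monom = "nat set \<Rightarrow>\<^sub>0 nat"
type_synonym 'k mpoly = "monom \<Rightarrow>\<^sub>0 'k"

text \<open>Monomials of R[G]: exponent vectors supported on stable sets.\<close>
definition monomials_RG :: "nat \<Rightarrow> nat set set \<Rightarrow> monom set" where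
  "monomials_RG d E = {m. Poly_Mapping.keys m \<subseteq> stable_sets d E}"

definition RG :: "nat \<Rightarrow> nat set set \<Rightarrow> ('k::field) mpoly set" where
  "RG d E = {p. Poly_Mapping.keys p \<subseteq> monomials_RG d E}"

definition monom_degree :: "monom \<Rightarrow> nat" where
  "monom_degree m = (\<Sum>S\<in>Poly_Mapping.keys m. Poly_Mapping.lookup m S)"

definition mon :: "monom \<Rightarrow> ('k::field) mpoly" where
  "mon m = Poly_Mapping.single m 1"

definition ideal_gen :: "('k::field) mpoly set \<Rightarrow> 'k mpoly set \<Rightarrow> 'k mpoly set" where
  "ideal_gen R B = {p. \<exists>A c. finite A \<and> A \<subseteq> B \<and> (\<forall>b\<in>A. c b \<in> R) \<and> p = (\<Sum>b\<in>A. c b * b)}"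

text \<open>Exponent vector of x_f = prod_{l=1..k} x_{f^{-1}(l)} for a k-coloring f of G[W].\<close>
definition xcol :: "nat set \<Rightarrow> nat \<Rightarrow> (nat \<Rightarrow> nat) \<Rightarrow> monom" where
  "xcol W k f = (\<Sum>l\<in>{1..k}. Poly_Mapping.single {v\<in>W. f v = l} 1)"

definition J_gens :: "nat \<Rightarrow> nat set set \<Rightarrow> ('k::field) mpoly set" where
  "J_gens d E = {mon (xcol W 2 f) - mon (xcol W 2 g) | W f g.
       W \<subseteq> {1..d} \<and> is_coloring E W 2 f \<and> is_coloring E W 2 g}"

definition M_gens :: "nat \<Rightarrow> nat set set \<Rightarrow> ('k::field) mpoly set" where
  "M_gens d E = {mon (Poly_Mapping.single S 1 + Poly_Mapping.single T 1) | S T.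
       S \<in> stable_sets d E \<and> T \<in> stable_sets d E \<and> S \<inter> T \<noteq> {}}"

definition kempe_ideal :: "nat \<Rightarrow> nat set set \<Rightarrow> ('k::field) mpoly set" where
  "kempe_ideal d E = ideal_gen (RG d E) (J_gens d E \<union> M_gens d E)"

definition monomial_order :: "monom set \<Rightarrow> (monom \<Rightarrow> monom \<Rightarrow> bool) \<Rightarrow> bool" where
  "monomial_order Mon lt \<longleftrightarrow>
     (\<forall>a\<in>Mon. \<not> lt a a) \<and>
     (\<forall>a\<in>Mon. \<forall>b\<in>Mon. \<forall>c\<in>Mon. lt a b \<longrightarrow> lt b c \<longrightarrow> lt a c) \<and>
     (\<forall>a\<in>Mon. \<forall>b\<in>Mon. a \<noteq> b \<longrightarrow> lt a b \<or> lt b a) \<and>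
     wfP (\<lambda>a b. a \<in> Mon \<and> b \<in> Mon \<and> lt a b) \<and>
     (\<forall>a\<in>Mon. \<forall>b\<in>Mon. \<forall>c\<in>Mon. lt a b \<longrightarrow> lt (a + c) (b + c)) \<and>
     (\<forall>a\<in>Mon. a \<noteq> 0 \<longrightarrow> lt 0 a)"

definition lead_monom :: "(monom \<Rightarrow> monom \<Rightarrow> bool) \<Rightarrow> ('k::field) mpoly \<Rightarrow> monom" where
  "lead_monom lt p = (THE m. m \<in> Poly_Mapping.keys p \<and> (\<forall>m'\<in>Poly_Mapping.keys p. m' \<noteq> m \<longrightarrow> lt m' m))"

definition initial_ideal :: "nat \<Rightarrow> nat set set \<Rightarrow> (monom \<Rightarrow> monom \<Rightarrow> bool) \<Rightarrow> ('k::field) mpoly set \<Rightarrow> 'k mpoly set" where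
  "initial_ideal d E lt I = ideal_gen (RG d E) {mon (lead_monom lt p) | p. p \<in> I \<and> p \<noteq> 0}"

definition std_monomials :: "('k::field) itself \<Rightarrow> nat \<Rightarrow> nat set set \<Rightarrow> (monom \<Rightarrow> monom \<Rightarrow> bool) \<Rightarrow> nat \<Rightarrow> monom set" where
  "std_monomials _ d E lt k = {m \<in> monomials_RG d E. monom_degree m = k \<and>
      (mon m :: 'k mpoly) \<notin> initial_ideal d E lt (kempe_ideal d E :: 'k mpoly set)}"

end

theory Submission
  imports Defs
begin

lemma pm_sum_single:
  "p = (\<Sum>u\<in>Poly_Mapping.keys p. Poly_Mapping.single u (Poly_Mapping.lookup p u))"
  by (rule poly_mapping_eqI) (auto simp: lookup_sum lookup_single when_def in_keys_iff)

lemma lookup_single_mult: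
  fixes p :: "('a::cancel_comm_monoid_add \<Rightarrow>\<^sub>0 'b::semiring_1)"
  shows "Poly_Mapping.lookup (Poly_Mapping.single u 1 * p) (u + m) = Poly_Mapping.lookup p m"
proof -
  have "Poly_Mapping.single u 1 * p = (\<Sum>w\<in>Poly_Mapping.keys p. Poly_Mapping.single (u + w) (Poly_Mapping.lookup p w))"
    by (subst pm_sum_single[of p]) (simp add: sum_distrib_left mult_single)
  then show ?thesis
    by (auto simp: lookup_sum lookup_single when_def in_keys_iff)
qed

lemma keys_single_mult:
  "Poly_Mapping.keys (Poly_Mapping.single u 1 * p) \<subseteq> (\<lambda>w. u + w) ` Poly_Mapping.keys p"
  using keys_mult[of "Poly_Mapping.single u 1" p] by (auto split: if_splits)

lemma lookup_sum_single_card: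
  "finite L \<Longrightarrow> Poly_Mapping.lookup (\<Sum>l\<in>L. Poly_Mapping.single (Z l) (1::nat)) T = card {l\<in>L. Z l = T}"
  by (simp add: lookup_sum lookup_single when_def sum.If_cases Int_def)

definition phi :: "monom set \<Rightarrow> ('k::field) mpoly \<Rightarrow> 'k" where
  "phi X p = (\<Sum>m\<in>X. Poly_Mapping.lookup p m)"

lemma phi_sum: "phi X (\<Sum>i\<in>I. q i) = (\<Sum>i\<in>I. phi X (q i))"
  unfolding phi_def lookup_sum by (rule sum.swap)

lemma phi_single: "finite X \<Longrightarrow> phi X (Poly_Mapping.single y s) = (if y \<in> X then s else 0)"
  unfolding phi_def by (simp add: lookup_single when_def)

lemma phi_diff: "phi X (p - q) = phi X p - phi X q"
  unfolding phi_def by (simp add: lookup_minus sum_subtractf)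

lemma keys_mon_add: "Poly_Mapping.keys ((a::monom) + b) \<subseteq> Poly_Mapping.keys a \<union> Poly_Mapping.keys b"
  by (rule keys_add)


lemma mo_props:
  assumes "monomial_order Mon lt"
  shows "\<And>a. a\<in>Mon \<Longrightarrow> \<not> lt a a"
    and "\<And>a b c. a\<in>Mon \<Longrightarrow> b\<in>Mon \<Longrightarrow> c\<in>Mon \<Longrightarrow> lt a b \<Longrightarrow> lt b c \<Longrightarrow> lt a c"
    and "\<And>a b. a\<in>Mon \<Longrightarrow> b\<in>Mon \<Longrightarrow> a \<noteq> b \<Longrightarrow> lt a b \<or> lt b a"
    and "\<And>a b c. a\<in>Mon \<Longrightarrow> b\<in>Mon \<Longrightarrow> c\<in>Mon \<Longrightarrow> lt a b \<Longrightarrow> lt (a + c) (b + c)"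
  using assms unfolding monomial_order_def by blast+

lemma mo_max:
  assumes mo: "monomial_order Mon lt" and "finite F" "F \<noteq> {}" "F \<subseteq> Mon"
  shows "\<exists>m\<in>F. \<forall>m'\<in>F. m' \<noteq> m \<longrightarrow> lt m' m"
  using assms(2-4)
proof (induction F rule: finite_ne_induct)
  case (singleton x) then show ?case by auto
next
  case (insert x F)
  then obtain m where m: "m \<in> F" "\<forall>m'\<in>F. m' \<noteq> m \<longrightarrow> lt m' m" by auto
  show ?case
  proof (cases "lt m x")
    case True
    have "\<forall>m'\<in>insert x F. m' \<noteq> x \<longrightarrow> lt m' x"
    proof (intro ballI impI)
      fix m' assume "m' \<in> insert x F" "m' \<noteq> x"
      then have "m' \<in> F" by simp
      show "lt m' x"
      proof (cases "m' = m")
        case True then show ?thesis using \<open>lt m x\<close> by simp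
      next
        case False
        then have "lt m' m" using m \<open>m' \<in> F\<close> by blast
        then show ?thesis using mo_props(2)[OF mo, of m' m x] True insert.prems \<open>m' \<in> F\<close> m(1) by blast
      qed
    qed
    then show ?thesis by blast
  next
    case False
    have "x \<noteq> m" using insert.hyps m(1) by blast
    then have "lt x m" using False mo_props(3)[OF mo, of x m] insert.prems m(1) by blast
    then show ?thesis using m by blast
  qed
qed

lemma mo_min:
  assumes mo: "monomial_order Mon lt" and "finite F" "F \<noteq> {}" "F \<subseteq> Mon"
  shows "\<exists>m\<in>F. \<forall>m'\<in>F. m' \<noteq> m \<longrightarrow> lt m m'"
  using assms(2-4)
proof (induction F rule: finite_ne_induct)
  case (singleton x) then show ?case by auto
next
  case (insert x F)
  then obtain m where m: "m \<in> F" "\<forall>m'\<in>F. m' \<noteq> m \<longrightarrow> lt m m'" by auto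
  show ?case
  proof (cases "lt x m")
    case True
    have "\<forall>m'\<in>insert x F. m' \<noteq> x \<longrightarrow> lt x m'"
    proof (intro ballI impI)
      fix m' assume "m' \<in> insert x F" "m' \<noteq> x"
      then have "m' \<in> F" by simp
      show "lt x m'"
      proof (cases "m' = m")
        case True then show ?thesis using \<open>lt x m\<close> by simp
      next
        case False
        then have "lt m m'" using m \<open>m' \<in> F\<close> by blast
        then show ?thesis using mo_props(2)[OF mo, of x m m'] True insert.prems \<open>m' \<in> F\<close> m(1) by blast
      qed
    qed
    then show ?thesis by blast
  next
    case False
    have "x \<noteq> m" using insert.hyps m(1) by blast
    then have "lt m x" using False mo_props(3)[OF mo, of x m] insert.prems m(1) by blast
    then show ?thesis using m by blast
  qed
qed

lemma lead_eq:
  assumes mo: "monomial_order Mon lt" and "Poly_Mapping.keys p \<subseteq> Mon"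
    and "M \<in> Poly_Mapping.keys p" and "\<forall>m'\<in>Poly_Mapping.keys p. m' \<noteq> M \<longrightarrow> lt m' M"
  shows "lead_monom lt p = M"
  unfolding lead_monom_def
proof (rule the_equality)
  show "M \<in> Poly_Mapping.keys p \<and> (\<forall>m'\<in>Poly_Mapping.keys p. m' \<noteq> M \<longrightarrow> lt m' M)" using assms by blast
next
  fix m assume H: "m \<in> Poly_Mapping.keys p \<and> (\<forall>m'\<in>Poly_Mapping.keys p. m' \<noteq> m \<longrightarrow> lt m' m)"
  show "m = M"
  proof (rule ccontr)
    assume ne: "m \<noteq> M"
    have mM: "m \<in> Mon" "M \<in> Mon" using H assms(2,3) by auto
    have "lt M m" using H assms(3) ne by auto
    moreover have "lt m M" using assms(4) H ne by auto
    ultimately have "lt M M" using mo_props(2)[OF mo, of M m M] mM by simp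
    with mo_props(1)[OF mo] mM show False by simp
  qed
qed

lemma lead_props:
  assumes mo: "monomial_order Mon lt" and "Poly_Mapping.keys p \<subseteq> Mon" and "p \<noteq> 0"
  shows "lead_monom lt p \<in> Poly_Mapping.keys p \<and> (\<forall>m'\<in>Poly_Mapping.keys p. m' \<noteq> lead_monom lt p \<longrightarrow> lt m' (lead_monom lt p))"
proof -
  have "finite (Poly_Mapping.keys p)" "Poly_Mapping.keys p \<noteq> {}" using assms(3) by auto
  then obtain M where M: "M \<in> Poly_Mapping.keys p" "\<forall>m'\<in>Poly_Mapping.keys p. m' \<noteq> M \<longrightarrow> lt m' M"
    using mo_max[OF mo, of "Poly_Mapping.keys p"] assms(2) by blast
  have "lead_monom lt p = M" by (rule lead_eq[OF mo assms(2) M])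
  with M show ?thesis by simp
qed

lemma ideal_gen_mem: "b \<in> B \<Longrightarrow> c \<in> R \<Longrightarrow> c * b \<in> ideal_gen R B"
  unfolding ideal_gen_def by (rule CollectI, rule exI[of _ "{b}"], rule exI[of _ "\<lambda>_. c"]) auto

lemma ideal_gen_zero: "0 \<in> ideal_gen R B"
  unfolding ideal_gen_def by (rule CollectI, rule exI[of _ "{}"]) auto

lemma ideal_gen_add:
  assumes R0: "0 \<in> R" and Radd: "\<And>x y. x\<in>R \<Longrightarrow> y\<in>R \<Longrightarrow> x+y \<in> R"
    and "p \<in> ideal_gen R B" "q \<in> ideal_gen R B"
  shows "p + q \<in> ideal_gen R B"
proof -
  obtain A1 c1 where 1: "finite A1" "A1 \<subseteq> B" "\<forall>b\<in>A1. c1 b \<in> R" "p = (\<Sum>b\<in>A1. c1 b * b)"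
    using assms(3) unfolding ideal_gen_def by blast
  obtain A2 c2 where 2: "finite A2" "A2 \<subseteq> B" "\<forall>b\<in>A2. c2 b \<in> R" "q = (\<Sum>b\<in>A2. c2 b * b)"
    using assms(4) unfolding ideal_gen_def by blast
  have ex: "(\<Sum>b\<in>A. c b * b) = (\<Sum>b\<in>A1\<union>A2. (if b\<in>A then c b else 0) * b)"
    if "A \<subseteq> A1 \<union> A2" for A c
  proof -
    have "(\<Sum>b\<in>A1\<union>A2. (if b\<in>A then c b else 0) * b) = (\<Sum>b\<in>A1\<union>A2. if b\<in>A then c b * b else 0)"
      by (rule sum.cong) auto
    also have "\<dots> = (\<Sum>b\<in>(A1\<union>A2)\<inter>A. c b * b)"
      by (rule sum.inter_restrict[symmetric]) (use 1 2 in auto)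
    also have "(A1\<union>A2)\<inter>A = A" using that by auto
    finally show ?thesis by simp
  qed
  define c where "c b = (if b \<in> A1 then c1 b else 0) + (if b \<in> A2 then c2 b else 0)" for b
  have e1: "p = (\<Sum>b\<in>A1\<union>A2. (if b\<in>A1 then c1 b else 0) * b)"
    unfolding 1(4) by (rule ex) blast
  have e2: "q = (\<Sum>b\<in>A1\<union>A2. (if b\<in>A2 then c2 b else 0) * b)"
    unfolding 2(4) by (rule ex) blast
  have "p + q = (\<Sum>b\<in>A1\<union>A2. (if b\<in>A1 then c1 b else 0) * b + (if b\<in>A2 then c2 b else 0) * b)"
    unfolding e1 e2 by (rule sum.distrib[symmetric])
  also have "\<dots> = (\<Sum>b\<in>A1\<union>A2. c b * b)"
    unfolding c_def by (rule sum.cong[OF refl]) (rule distrib_right[symmetric])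
  finally have "p + q = (\<Sum>b\<in>A1\<union>A2. c b * b)" .
  moreover have "\<forall>b\<in>A1\<union>A2. c b \<in> R"
  proof
    fix b assume "b \<in> A1 \<union> A2"
    have x: "(if b \<in> A1 then c1 b else 0) \<in> R" using 1(3) R0 by simp
    have y: "(if b \<in> A2 then c2 b else 0) \<in> R" using 2(3) R0 by simp
    show "c b \<in> R" unfolding c_def by (rule Radd[OF x y])
  qed
  moreover have "finite (A1 \<union> A2)" "A1 \<union> A2 \<subseteq> B" using 1 2 by auto
  ultimately show ?thesis unfolding ideal_gen_def
    by (intro CollectI exI[of _ "A1 \<union> A2"] exI[of _ c]) blast
qed

lemma ideal_gen_uminus:
  assumes Rneg: "\<And>x. x\<in>R \<Longrightarrow> -x \<in> R" and "p \<in> ideal_gen R B"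
  shows "- p \<in> ideal_gen R B"
proof -
  obtain A1 c1 where 1: "finite A1" "A1 \<subseteq> B" "\<forall>b\<in>A1. c1 b \<in> R" "p = (\<Sum>b\<in>A1. c1 b * b)"
    using assms(2) unfolding ideal_gen_def by blast
  have "- p = (\<Sum>b\<in>A1. (- c1 b) * b)" unfolding 1(4) by (simp add: sum_negf)
  moreover have "\<forall>b\<in>A1. - c1 b \<in> R" using 1(3) Rneg by blast
  ultimately show ?thesis using 1(1,2) unfolding ideal_gen_def
    by (intro CollectI exI[of _ A1] exI[of _ "\<lambda>b. - c1 b"]) blast
qed

lemma ideal_gen_diff:
  assumes "0 \<in> R" "\<And>x y. x\<in>R \<Longrightarrow> y\<in>R \<Longrightarrow> x+y \<in> R" "\<And>x. x\<in>R \<Longrightarrow> -x \<in> R"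
    and "p \<in> ideal_gen R B" "q \<in> ideal_gen R B"
  shows "p - q \<in> ideal_gen R B"
  using ideal_gen_add[OF assms(1,2) assms(4) ideal_gen_uminus[OF assms(3,5)]] by simp

lemma Mon_add: "a \<in> monomials_RG d E \<Longrightarrow> b \<in> monomials_RG d E \<Longrightarrow> a + b \<in> monomials_RG d E"
  unfolding monomials_RG_def using keys_add[of a b] by blast

lemma RG_zero: "0 \<in> RG d E" unfolding RG_def by simp
lemma RG_add: "x \<in> RG d E \<Longrightarrow> y \<in> RG d E \<Longrightarrow> x + y \<in> RG d E"
  unfolding RG_def using keys_add[of x y] by blast
lemma RG_uminus: "x \<in> RG d E \<Longrightarrow> - x \<in> RG d E"
  unfolding RG_def by simp
lemma RG_mon: "m \<in> monomials_RG d E \<Longrightarrow> mon m \<in> RG d E"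
  unfolding RG_def mon_def by simp
lemma Mon_zero: "0 \<in> monomials_RG d E" unfolding monomials_RG_def by simp
lemma RG_one: "(1::'k::field mpoly) \<in> RG d E" unfolding RG_def using Mon_zero by simp
lemma RG_mult:
  assumes "x \<in> RG d E" "y \<in> RG d E" shows "x * y \<in> RG d E"
proof -
  have "m \<in> monomials_RG d E" if mk: "m \<in> Poly_Mapping.keys (x * y)" for m
  proof -
    obtain a b where "m = a + b" "a \<in> Poly_Mapping.keys x" "b \<in> Poly_Mapping.keys y"
      using keys_mult[of x y] mk by blast
    then show ?thesis using assms Mon_add unfolding RG_def by blast
  qed
  then show ?thesis unfolding RG_def by blast
qed

lemma RG_ideal_diff:
  "p \<in> ideal_gen (RG d E) B \<Longrightarrow> q \<in> ideal_gen (RG d E) B \<Longrightarrow> p - q \<in> ideal_gen (RG d E) B"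
  by (rule ideal_gen_diff) (auto intro: RG_zero RG_add RG_uminus)

lemma RG_ideal_add:
  "p \<in> ideal_gen (RG d E) B \<Longrightarrow> q \<in> ideal_gen (RG d E) B \<Longrightarrow> p + q \<in> ideal_gen (RG d E) B"
  by (rule ideal_gen_add) (auto intro: RG_zero RG_add)

lemma ideal_sub_RG:
  assumes "B \<subseteq> RG d E" "p \<in> ideal_gen (RG d E) B"
  shows "p \<in> RG d E"
proof -
  obtain A1 c1 where 1: "finite A1" "A1 \<subseteq> B" "\<forall>b\<in>A1. c1 b \<in> RG d E" "p = (\<Sum>b\<in>A1. c1 b * b)"
    using assms(2) unfolding ideal_gen_def by blast
  have "Poly_Mapping.keys p \<subseteq> (\<Union>b\<in>A1. Poly_Mapping.keys (c1 b * b))"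
    unfolding 1(4) by (rule keys_sum)
  moreover have "c1 b * b \<in> RG d E" if "b \<in> A1" for b
    using RG_mult 1 assms(1) that by blast
  ultimately show ?thesis unfolding RG_def by blast
qed

definition cls :: "nat \<Rightarrow> (nat \<Rightarrow> nat) \<Rightarrow> nat \<Rightarrow> nat set" where
  "cls d f l = {v\<in>{1..d}. f v = l}"

lemma xcol_cls: "xcol {1..d} k f = (\<Sum>l\<in>{1..k}. Poly_Mapping.single (cls d f l) 1)"
  unfolding xcol_def cls_def by simp

lemma lookup_xcol: "Poly_Mapping.lookup (xcol {1..d} k f) T = card {l\<in>{1..k}. cls d f l = T}"
  unfolding xcol_cls by (rule lookup_sum_single_card) simp

lemma cls_disj: "l \<noteq> l' \<Longrightarrow> cls d f l \<inter> cls d f l' = {}"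
  unfolding cls_def by auto

lemma coloring_stable:
  assumes sg: "simple_graph d E" and W: "W \<subseteq> {1..d}" and c: "is_coloring E W k f"
  shows "{v\<in>W. f v = l} \<in> stable_sets d E"
  unfolding stable_sets_def
proof (intro CollectI conjI ballI)
  show "{v\<in>W. f v = l} \<subseteq> {1..d}" using W by auto
next
  fix e assume e: "e \<in> E"
  then obtain x y where xy: "e = {x, y}" "x \<noteq> y" using sg unfolding simple_graph_def by blast
  show "\<not> e \<subseteq> {v\<in>W. f v = l}"
  proof
    assume "e \<subseteq> {v\<in>W. f v = l}"
    then have "x \<in> W" "y \<in> W" "f x = l" "f y = l" using xy by auto
    moreover have "f x \<noteq> f y" using c \<open>x \<in> W\<close> \<open>y \<in> W\<close> e xy(1) unfolding is_coloring_def by blast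
    ultimately show False by simp
  qed
qed

lemma cls_stable:
  "simple_graph d E \<Longrightarrow> is_coloring E {1..d} k f \<Longrightarrow> cls d f l \<in> stable_sets d E"
  unfolding cls_def by (rule coloring_stable) auto

lemma keys_sum_single_sub:
  "Poly_Mapping.keys (\<Sum>l\<in>L. Poly_Mapping.single (Z l) (1::nat)) \<subseteq> Z ` L"
  using keys_sum[of "\<lambda>l. Poly_Mapping.single (Z l) (1::nat)" L] by auto

lemma xcol_Mon:
  assumes "simple_graph d E" "is_coloring E {1..d} k f"
  shows "xcol {1..d} k f \<in> monomials_RG d E"
  unfolding monomials_RG_def xcol_cls
  using keys_sum_single_sub[of "cls d f" "{1..k}"] cls_stable[OF assms] by blast

lemma sumU_Mon:
  assumes "simple_graph d E" "is_coloring E {1..d} k f"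
  shows "(\<Sum>l\<in>L. Poly_Mapping.single (cls d f l) 1) \<in> monomials_RG d E"
  unfolding monomials_RG_def
  using keys_sum_single_sub[of "cls d f" L] cls_stable[OF assms] by blast

lemma xcolW_Mon:
  assumes "simple_graph d E" "W \<subseteq> {1..d}" "is_coloring E W k f"
  shows "xcol W k f \<in> monomials_RG d E"
  unfolding monomials_RG_def xcol_def
  using keys_sum_single_sub[of "\<lambda>l. {v\<in>W. f v = l}" "{1..k}"] coloring_stable[OF assms] by blast

lemma card_ge2_obtain:
  assumes "finite A" "2 \<le> card A"
  obtains x y where "x \<in> A" "y \<in> A" "x \<noteq> y"
proof -
  have "\<not> card A \<le> Suc 0" using assms(2) by simp
  then have "\<not> (\<forall>a\<in>A. \<forall>b\<in>A. a = b)" using card_le_Suc0_iff_eq[OF assms(1)] by blast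
  then show ?thesis using that by blast
qed

lemma two_classes:
  assumes "xcol {1..d} k f = w + Poly_Mapping.single S 1 + Poly_Mapping.single T 1"
  shows "\<exists>l1 l2. l1 \<in> {1..k} \<and> l2 \<in> {1..k} \<and> l1 \<noteq> l2 \<and> cls d f l1 = S \<and> cls d f l2 = T"
proof -
  define L where "L Z = {l\<in>{1..k}. cls d f l = Z}" for Z
  have fin: "finite (L Z)" for Z unfolding L_def by simp
  have c0: "Poly_Mapping.lookup (xcol {1..d} k f) Z = Poly_Mapping.lookup w Z + (if S = Z then 1 else 0) + (if T = Z then 1 else 0)" for Z
    unfolding assms by (simp add: lookup_add lookup_single when_def)
  have c: "card (L Z) = Poly_Mapping.lookup (xcol {1..d} k f) Z" for Z
    unfolding L_def lookup_xcol ..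
  show ?thesis
  proof (cases "S = T")
    case True
    then have "2 \<le> card (L S)" using c[of S] c0[of S] by simp
    then obtain l1 l2 where "l1 \<in> L S" "l2 \<in> L S" "l1 \<noteq> l2" using card_ge2_obtain fin by blast
    then show ?thesis using True unfolding L_def by blast
  next
    case False
    have "1 \<le> card (L S)" "1 \<le> card (L T)" using c[of S] c[of T] c0[of S] c0[of T] by simp_all
    then have "L S \<noteq> {}" "L T \<noteq> {}" by auto
    then obtain l1 l2 where "l1 \<in> L S" "l2 \<in> L T" by blast
    then show ?thesis using False unfolding L_def by blast
  qed
qed

lemma xcol_perm:
  assumes "\<sigma> permutes {1..k}" "\<forall>v\<in>{1..d}. h v = \<sigma> (g v)"
  shows "xcol {1..d} k h = xcol {1..d} k g"
proof -
  have inj: "inj \<sigma>" using permutes_inj[OF assms(1)] .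
  have e: "cls d h (\<sigma> l) = cls d g l" for l
    using assms(2) inj unfolding cls_def by (auto simp: inj_eq)
  have "(\<Sum>l\<in>{1..k}. Poly_Mapping.single (cls d h (\<sigma> l)) (1::nat)) = (\<Sum>l\<in>{1..k}. Poly_Mapping.single (cls d h l) 1)"
    by (rule sum.reindex_bij_betw[OF permutes_imp_bij[OF assms(1)]])
  then show ?thesis unfolding xcol_cls e by simp
qed

lemma sum_split2:
  assumes "finite A" "i \<in> A" "j \<in> A" "i \<noteq> j"
  shows "sum F A = sum F (A - {i, j}) + F i + F j"
proof -
  have "sum F A = F i + sum F (A - {i})" by (rule sum.remove[OF assms(1,2)])
  also have "sum F (A - {i}) = F j + sum F (A - {i} - {j})"
    by (rule sum.remove) (use assms in auto)
  also have "A - {i} - {j} = A - {i, j}" by auto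
  finally show ?thesis by (simp add: ac_simps)
qed

lemma step_struct:
  assumes "i \<in> {1..k}" "j \<in> {1..k}" "i \<noteq> j"
    and out: "\<forall>v\<in>{1..d}. f v \<noteq> i \<and> f v \<noteq> j \<longrightarrow> f' v = f v"
    and inn: "\<forall>v\<in>{1..d}. f v = i \<or> f v = j \<longrightarrow> f' v = i \<or> f' v = j"
  shows "xcol {1..d} k f = (\<Sum>l\<in>{1..k}-{i,j}. Poly_Mapping.single (cls d f l) 1)
            + Poly_Mapping.single (cls d f i) 1 + Poly_Mapping.single (cls d f j) 1"
    and "xcol {1..d} k f' = (\<Sum>l\<in>{1..k}-{i,j}. Poly_Mapping.single (cls d f l) 1)
            + Poly_Mapping.single (cls d f' i) 1 + Poly_Mapping.single (cls d f' j) 1"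
proof -
  show "xcol {1..d} k f = (\<Sum>l\<in>{1..k}-{i,j}. Poly_Mapping.single (cls d f l) 1)
            + Poly_Mapping.single (cls d f i) 1 + Poly_Mapping.single (cls d f j) 1"
    unfolding xcol_cls by (rule sum_split2) (use assms in auto)
  have e: "cls d f' l = cls d f l" if "l \<in> {1..k}-{i,j}" for l
  proof -
    have "l \<noteq> i" "l \<noteq> j" using that by auto
    have "f' v = l \<longleftrightarrow> f v = l" if "v\<in>{1..d}" for v
      using out inn \<open>l\<noteq>i\<close> \<open>l\<noteq>j\<close> that by (cases "f v = i \<or> f v = j") auto
    then show ?thesis unfolding cls_def by auto
  qed
  have "xcol {1..d} k f' = (\<Sum>l\<in>{1..k}-{i,j}. Poly_Mapping.single (cls d f' l) 1)
            + Poly_Mapping.single (cls d f' i) 1 + Poly_Mapping.single (cls d f' j) 1"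
    unfolding xcol_cls by (rule sum_split2) (use assms in auto)
  also have "(\<Sum>l\<in>{1..k}-{i,j}. Poly_Mapping.single (cls d f' l) (1::nat)) = (\<Sum>l\<in>{1..k}-{i,j}. Poly_Mapping.single (cls d f l) 1)"
    by (rule sum.cong[OF refl]) (simp add: e)
  finally show "xcol {1..d} k f' = (\<Sum>l\<in>{1..k}-{i,j}. Poly_Mapping.single (cls d f l) 1)
            + Poly_Mapping.single (cls d f' i) 1 + Poly_Mapping.single (cls d f' j) 1" .
qed

lemma sum_12: "(\<Sum>l\<in>{1..2::nat}. F l) = F 1 + F 2"
proof -
  have "{1..2::nat} = {1, 2}" by auto
  then show ?thesis by simp
qed

lemma xcol2: "xcol W 2 a = Poly_Mapping.single {v\<in>W. a v = 1} 1 + Poly_Mapping.single {v\<in>W. a v = 2} 1"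
  unfolding xcol_def by (rule sum_12)

lemma rt_in: "(adj_in E X)\<^sup>*\<^sup>* u v \<Longrightarrow> u \<in> X \<Longrightarrow> v \<in> X"
  by (induction rule: rtranclp_induct) (auto simp: adj_in_def)

lemma comp_sub: "is_component E X C \<Longrightarrow> C \<subseteq> X"
  unfolding is_component_def using rt_in by blast

lemma adj_sym: "adj_in E X u v \<Longrightarrow> adj_in E X v u"
  unfolding adj_in_def by (simp add: insert_commute)

lemma rt_sym: "(adj_in E X)\<^sup>*\<^sup>* u v \<Longrightarrow> (adj_in E X)\<^sup>*\<^sup>* v u"
proof (induction rule: rtranclp_induct)
  case base then show ?case by simp
next
  case (step y z)
  then show ?case using converse_rtranclp_into_rtranclp[OF adj_sym[OF step(2)] step(3)] by simp
qed

lemma comp_eq: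
  assumes "is_component E X C1" "is_component E X C2" "x \<in> C1" "x \<in> C2"
  shows "C1 = C2"
proof -
  obtain u1 where u1: "C1 = {v. (adj_in E X)\<^sup>*\<^sup>* u1 v}" using assms(1) unfolding is_component_def by blast
  obtain u2 where u2: "C2 = {v. (adj_in E X)\<^sup>*\<^sup>* u2 v}" using assms(2) unfolding is_component_def by blast
  have 1: "(adj_in E X)\<^sup>*\<^sup>* u1 x" "(adj_in E X)\<^sup>*\<^sup>* u2 x" using assms(3,4) u1 u2 by auto
  have a: "(adj_in E X)\<^sup>*\<^sup>* u2 u1" using rtranclp_trans[OF 1(2) rt_sym[OF 1(1)]] .
  have b: "(adj_in E X)\<^sup>*\<^sup>* u1 u2" using rtranclp_trans[OF 1(1) rt_sym[OF 1(2)]] .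
  show ?thesis unfolding u1 u2 using rtranclp_trans[OF a] rtranclp_trans[OF b] by blast
qed

lemma comp_closed:
  assumes "is_component E X C" "v \<in> C" "adj_in E X v w"
  shows "w \<in> C"
proof -
  obtain u where u: "C = {v. (adj_in E X)\<^sup>*\<^sup>* u v}" using assms(1) unfolding is_component_def by blast
  then show ?thesis using assms(2,3) by (auto intro: rtranclp.rtrancl_into_rtrancl)
qed

lemma kstep_coloring:
  assumes cf: "is_coloring E {1..d} k f"
    and ij: "1 \<le> i" "i < j" "j \<le> k"
    and comp: "is_component E {v\<in>{1..d}. f v = i \<or> f v = j} C"
  shows "is_coloring E {1..d} k (\<lambda>v. if v \<in> C then swap_colors i j (f v) else f v)"
proof -
  let ?W = "{v\<in>{1..d}. f v = i \<or> f v = j}"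
  let ?g = "\<lambda>v. if v \<in> C then swap_colors i j (f v) else f v"
  have CW: "C \<subseteq> ?W" by (rule comp_sub[OF comp])
  have vals: "?g v \<in> {1..k}" if "v \<in> {1..d}" for v
    using CW cf that ij unfolding is_coloring_def swap_colors_def by auto
  have edge: "?g x \<noteq> ?g y" if xy: "x \<in> {1..d}" "y \<in> {1..d}" "{x, y} \<in> E" for x y
  proof -
    have fxy: "f x \<noteq> f y" using cf xy unfolding is_coloring_def by blast
    show ?thesis
    proof (cases "x \<in> C")
      case True
      then have xW: "f x = i \<or> f x = j" using CW by auto
      show ?thesis
      proof (cases "y \<in> C")
        case True
        then show ?thesis using \<open>x \<in> C\<close> fxy ij unfolding swap_colors_def by auto
      next
        case False
        have "\<not> (f y = i \<or> f y = j)"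
        proof
          assume "f y = i \<or> f y = j"
          then have "adj_in E ?W x y" using xy xW unfolding adj_in_def by auto
          then have "y \<in> C" using comp_closed[OF comp True] by blast
          then show False using False by simp
        qed
        then show ?thesis using True False xW ij unfolding swap_colors_def by auto
      qed
    next
      case False
      show ?thesis
      proof (cases "y \<in> C")
        case True
        then have yW: "f y = i \<or> f y = j" using CW by auto
        have "\<not> (f x = i \<or> f x = j)"
        proof
          assume "f x = i \<or> f x = j"
          then have "adj_in E ?W y x" using xy yW unfolding adj_in_def by (auto simp: insert_commute)
          then have "x \<in> C" using comp_closed[OF comp True] by blast
          then show False using False by simp
        qed
        then show ?thesis using True False yW ij unfolding swap_colors_def by auto
      next
        case False
        then show ?thesis using \<open>x \<notin> C\<close> fxy by simp
      qed
    qed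
  qed
  show ?thesis unfolding is_coloring_def using vals edge by blast
qed

definition flip :: "nat \<Rightarrow> nat \<Rightarrow> nat set set \<Rightarrow> (nat \<Rightarrow> nat) \<Rightarrow> nat \<Rightarrow> nat" where
  "flip i j D f = (\<lambda>v. if v \<in> \<Union>D then swap_colors i j (f v) else f v)"

lemma flip_steps:
  assumes ij: "1 \<le> i" "i < j" "j \<le> k" and "finite D"
    and comps: "\<forall>C\<in>D. is_component E {v\<in>{1..d}. f v = i \<or> f v = j} C"
  shows "(kempe_step d E k)\<^sup>*\<^sup>* f (flip i j D f)"
  using assms(4,5)
proof (induction D rule: finite_induct)
  case empty
  have "flip i j {} f = f" unfolding flip_def by simp
  then show ?case by simp
next
  case (insert C D)
  let ?W = "{v\<in>{1..d}. f v = i \<or> f v = j}"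
  have IH: "(kempe_step d E k)\<^sup>*\<^sup>* f (flip i j D f)" using insert by auto
  have W': "{v\<in>{1..d}. flip i j D f v = i \<or> flip i j D f v = j} = ?W"
    using ij unfolding flip_def swap_colors_def by auto
  have compC: "is_component E ?W C" using insert.prems by simp
  have disj: "C \<inter> \<Union>D = {}"
  proof (rule ccontr)
    assume "C \<inter> \<Union>D \<noteq> {}"
    then obtain x C' where "x \<in> C" "x \<in> C'" "C' \<in> D" by blast
    moreover have "is_component E ?W C'" using insert.prems \<open>C' \<in> D\<close> by simp
    ultimately have "C = C'" using comp_eq[OF compC] by blast
    then show False using insert.hyps(2) \<open>C' \<in> D\<close> by simp
  qed
  have eq: "flip i j (insert C D) f = (\<lambda>v. if v \<in> C then swap_colors i j (flip i j D f v) else flip i j D f v)"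
    using disj unfolding flip_def by (auto simp: fun_eq_iff)
  have "kempe_step d E k (flip i j D f) (flip i j (insert C D) f)"
  proof -
    have compC': "is_component E {v\<in>{1..d}. flip i j D f v = i \<or> flip i j D f v = j} C"
      unfolding W' by (rule compC)
    show ?thesis unfolding kempe_step_def using ij compC' eq by blast
  qed
  with IH show ?case by (meson rtranclp.rtrancl_into_rtrancl)
qed

lemma chain:
  assumes cf: "is_coloring E {1..d} k f" and ch: "is_coloring E {1..d} k h"
    and ij: "1 \<le> i" "i < j" "j \<le> k"
    and out: "\<forall>v. \<not> (v \<in> {1..d} \<and> (f v = i \<or> f v = j)) \<longrightarrow> h v = f v"
    and inn: "\<forall>v\<in>{1..d}. (f v = i \<or> f v = j) \<longrightarrow> (h v = i \<or> h v = j)"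
  shows "(kempe_step d E k)\<^sup>*\<^sup>* f h"
proof -
  define W where "W = {v\<in>{1..d}. f v = i \<or> f v = j}"
  define D where "D = {C. is_component E W C \<and> (\<exists>v\<in>C. f v \<noteq> h v)}"
  have "D \<subseteq> Pow {1..d}" using comp_sub unfolding D_def W_def by blast
  then have finD: "finite D" by (rule finite_subset) simp
  have steps: "(kempe_step d E k)\<^sup>*\<^sup>* f (flip i j D f)"
    by (rule flip_steps[OF ij finD]) (simp add: D_def W_def)
  have prp: "f x = h x \<longleftrightarrow> f y = h y" if "(adj_in E W)\<^sup>*\<^sup>* x y" for x y
    using that
  proof (induction rule: rtranclp_induct)
    case base then show ?case by simp
  next
    case (step y z)
    have yz: "y \<in> W" "z \<in> W" "{y, z} \<in> E" using step(2) unfolding adj_in_def by auto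
    have "f y \<noteq> f z" using cf yz unfolding is_coloring_def W_def by blast
    moreover have "h y \<noteq> h z" using ch yz unfolding is_coloring_def W_def by blast
    moreover have "f y = i \<or> f y = j" "f z = i \<or> f z = j" using yz unfolding W_def by auto
    moreover have "h y = i \<or> h y = j" "h z = i \<or> h z = j" using yz inn unfolding W_def by auto
    ultimately have "f y = h y \<longleftrightarrow> f z = h z" using ij(2) by (elim disjE) simp_all
    with step(3) show ?case by simp
  qed
  have "flip i j D f = h"
  proof (rule ext)
    fix v
    show "flip i j D f v = h v"
    proof (cases "v \<in> W")
      case False
      then have "v \<notin> \<Union>D" using comp_sub unfolding D_def by blast
      then show ?thesis using False out unfolding flip_def W_def by auto
    next
      case True
      let ?C = "{w. (adj_in E W)\<^sup>*\<^sup>* v w}"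
      have compC: "is_component E W ?C" using True unfolding is_component_def by blast
      have vC: "v \<in> ?C" by simp
      show ?thesis
      proof (cases "f v = h v")
        case True
        have "v \<notin> \<Union>D"
        proof
          assume "v \<in> \<Union>D"
          then obtain C' where C': "C' \<in> D" "v \<in> C'" by blast
          then obtain w where w: "w \<in> C'" "f w \<noteq> h w" unfolding D_def by blast
          obtain u where u: "C' = {x. (adj_in E W)\<^sup>*\<^sup>* u x}" using C' unfolding D_def is_component_def by blast
          have "(adj_in E W)\<^sup>*\<^sup>* u v" using C'(2) u by simp
          then have "f u = h u \<longleftrightarrow> f v = h v" by (rule prp)
          moreover have "(adj_in E W)\<^sup>*\<^sup>* u w" using w(1) u by simp
          then have "f u = h u \<longleftrightarrow> f w = h w" by (rule prp)
          ultimately show False using True w(2) by simp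
        qed
        then show ?thesis using True unfolding flip_def by simp
      next
        case False
        have "?C \<in> D" unfolding D_def using compC vC False by blast
        then have "v \<in> \<Union>D" using vC by blast
        moreover have "f v = i \<or> f v = j" "h v = i \<or> h v = j" using True inn unfolding W_def by auto
        ultimately show ?thesis using False ij unfolding flip_def swap_colors_def by auto
      qed
    qed
  qed
  then show ?thesis using steps by simp
qed

lemma chain':
  assumes cf: "is_coloring E {1..d} k f" and ch: "is_coloring E {1..d} k h"
    and ij: "i \<in> {1..k}" "j \<in> {1..k}" "i \<noteq> j"
    and out: "\<forall>v. \<not> (v \<in> {1..d} \<and> (f v = i \<or> f v = j)) \<longrightarrow> h v = f v"
    and inn: "\<forall>v\<in>{1..d}. (f v = i \<or> f v = j) \<longrightarrow> (h v = i \<or> h v = j)"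
  shows "(kempe_step d E k)\<^sup>*\<^sup>* f h"
proof (cases "i < j")
  case True
  have "1 \<le> i" "j \<le> k" using ij by auto
  then show ?thesis using chain[OF cf ch _ True _ out inn] by blast
next
  case False
  then have ji: "j < i" using ij by simp
  have out': "\<forall>v. \<not> (v \<in> {1..d} \<and> (f v = j \<or> f v = i)) \<longrightarrow> h v = f v" using out by blast
  have inn': "\<forall>v\<in>{1..d}. (f v = j \<or> f v = i) \<longrightarrow> (h v = j \<or> h v = i)" using inn by blast
  have "1 \<le> j" "i \<le> k" using ij by auto
  then show ?thesis using chain[OF cf ch _ ji _ out' inn'] by blast
qed

lemma two_col_W:
  assumes cf: "is_coloring E {1..d} k f" and ij: "i \<noteq> j"
    and W: "W = {v\<in>{1..d}. f v = i \<or> f v = j}"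
  shows "is_coloring E W 2 (\<lambda>v. if f v = i then 1 else 2)"
    and "xcol W 2 (\<lambda>v. if f v = i then 1 else 2) = Poly_Mapping.single (cls d f i) 1 + Poly_Mapping.single (cls d f j) 1"
proof -
  show "is_coloring E W 2 (\<lambda>v. if f v = i then 1 else 2)"
    unfolding is_coloring_def
  proof (intro conjI ballI impI)
    fix v assume "v \<in> W" show "(if f v = i then 1 else 2) \<in> {1..2::nat}" by simp
  next
    fix u v assume uv: "u \<in> W" "v \<in> W" "{u, v} \<in> E"
    then have "f u \<noteq> f v" using cf W unfolding is_coloring_def by blast
    moreover have "f u = i \<or> f u = j" "f v = i \<or> f v = j" using uv W by auto
    ultimately show "(if f u = i then 1 else 2) \<noteq> (if f v = i then (1::nat) else 2)"
      using ij by (elim disjE) simp_all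
  qed
  have e1: "{v\<in>W. (if f v = i then 1 else 2) = (1::nat)} = cls d f i"
    unfolding W cls_def by auto
  have e2: "{v\<in>W. (if f v = i then 1 else 2) = (2::nat)} = cls d f j"
    unfolding W cls_def using ij by auto
  show "xcol W 2 (\<lambda>v. if f v = i then 1 else 2) = Poly_Mapping.single (cls d f i) 1 + Poly_Mapping.single (cls d f j) 1"
    unfolding xcol2 e1 e2 ..
qed

lemma mon_add_mult: "(mon (a + b) :: 'k::field mpoly) = mon a * mon b"
  unfolding mon_def by (simp add: mult_single)

lemma kstep_K:
  assumes sg: "simple_graph d E" and cf: "is_coloring E {1..d} k f" and st: "kempe_step d E k f f'"
  shows "is_coloring E {1..d} k f' \<and>
         mon (xcol {1..d} k f) - mon (xcol {1..d} k f') \<in> (kempe_ideal d E :: 'k::field mpoly set)"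
proof -
  obtain i j C where ij: "1 \<le> i" "i < j" "j \<le> k"
    and comp: "is_component E {v\<in>{1..d}. f v = i \<or> f v = j} C"
    and f': "f' = (\<lambda>v. if v \<in> C then swap_colors i j (f v) else f v)"
    using st unfolding kempe_step_def by blast
  have cf': "is_coloring E {1..d} k f'" using kstep_coloring[OF cf ij comp] f' by simp
  define W where "W = {v\<in>{1..d}. f v = i \<or> f v = j}"
  have CW: "C \<subseteq> W" using comp_sub[OF comp] unfolding W_def .
  have out: "\<forall>v\<in>{1..d}. f v \<noteq> i \<and> f v \<noteq> j \<longrightarrow> f' v = f v"
    using CW unfolding f' W_def by auto
  have inn: "\<forall>v\<in>{1..d}. f v = i \<or> f v = j \<longrightarrow> f' v = i \<or> f' v = j"
    unfolding f' swap_colors_def by auto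
  have W': "W = {v\<in>{1..d}. f' v = i \<or> f' v = j}"
  proof (rule set_eqI)
    fix v show "v \<in> W \<longleftrightarrow> v \<in> {v\<in>{1..d}. f' v = i \<or> f' v = j}"
      using out inn unfolding W_def by (cases "f v = i \<or> f v = j") auto
  qed
  have ik: "i \<in> {1..k}" "j \<in> {1..k}" "i \<noteq> j" using ij by auto
  note ss = step_struct[OF ik out inn]
  define U where "U = (\<Sum>l\<in>{1..k}-{i,j}. Poly_Mapping.single (cls d f l) (1::nat))"
  define a where "a = (\<lambda>v. if f v = i then 1 else (2::nat))"
  define b where "b = (\<lambda>v. if f' v = i then 1 else (2::nat))"
  note A = two_col_W[OF cf ik(3) W_def, folded a_def]
  note B = two_col_W[OF cf' ik(3) W', folded b_def]
  have gen: "mon (xcol W 2 a) - mon (xcol W 2 b) \<in> (J_gens d E :: 'k mpoly set)"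
  proof -
    have WS: "W \<subseteq> {1..d}" unfolding W_def by auto
    show ?thesis unfolding J_gens_def using A(1) B(1) WS by blast
  qed
  have UM: "U \<in> monomials_RG d E" unfolding U_def by (rule sumU_Mon[OF sg cf])
  have "mon (xcol {1..d} k f) - mon (xcol {1..d} k f') = (mon U :: 'k mpoly) * (mon (xcol W 2 a) - mon (xcol W 2 b))"
    unfolding ss A(2) B(2) U_def[symmetric] right_diff_distrib mon_add_mult[symmetric]
    by (simp add: add.assoc)
  moreover have "mon U * (mon (xcol W 2 a) - mon (xcol W 2 b)) \<in> (kempe_ideal d E :: 'k mpoly set)"
    unfolding kempe_ideal_def by (rule ideal_gen_mem) (use gen RG_mon[OF UM] in auto)
  ultimately show ?thesis using cf' by simp
qed

lemma ksteps_K: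
  assumes sg: "simple_graph d E" and "(kempe_step d E k)\<^sup>*\<^sup>* f h" and cf: "is_coloring E {1..d} k f"
  shows "is_coloring E {1..d} k h \<and>
         mon (xcol {1..d} k f) - mon (xcol {1..d} k h) \<in> (kempe_ideal d E :: 'k::field mpoly set)"
  using assms(2)
proof (induction rule: rtranclp_induct)
  case base
  then show ?case using cf ideal_gen_zero unfolding kempe_ideal_def by simp
next
  case (step y z)
  then have cy: "is_coloring E {1..d} k y"
    and d1: "mon (xcol {1..d} k f) - mon (xcol {1..d} k y) \<in> (kempe_ideal d E :: 'k mpoly set)" by auto
  have cz: "is_coloring E {1..d} k z"
    and d2: "mon (xcol {1..d} k y) - mon (xcol {1..d} k z) \<in> (kempe_ideal d E :: 'k mpoly set)"
    using kstep_K[OF sg cy step(2)] by auto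
  have "(mon (xcol {1..d} k f) - mon (xcol {1..d} k y)) + (mon (xcol {1..d} k y) - mon (xcol {1..d} k z))
        \<in> (kempe_ideal d E :: 'k mpoly set)"
    unfolding kempe_ideal_def by (rule RG_ideal_add) (use d1 d2 in \<open>simp_all add: kempe_ideal_def\<close>)
  then show ?case using cz by simp
qed

definition Xset :: "nat \<Rightarrow> nat set set \<Rightarrow> nat \<Rightarrow> (nat \<Rightarrow> nat) \<Rightarrow> monom set" where
  "Xset d E k g = {m. \<exists>f. is_coloring E {1..d} k f \<and> m = xcol {1..d} k f \<and> kempe_equiv d E k f g}"

lemma X_finite: "finite (Xset d E k g)"
proof -
  have "Xset d E k g \<subseteq> (\<lambda>\<phi>. xcol {1..d} k \<phi>) ` ({1..d} \<rightarrow>\<^sub>E {1..k})"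
  proof
    fix m assume "m \<in> Xset d E k g"
    then obtain f where f: "is_coloring E {1..d} k f" "m = xcol {1..d} k f" unfolding Xset_def by blast
    have r1: "restrict f {1..d} \<in> {1..d} \<rightarrow>\<^sub>E {1..k}" using f(1) unfolding is_coloring_def by auto
    have r2: "xcol {1..d} k (restrict f {1..d}) = xcol {1..d} k f"
    proof -
      have "{v\<in>{1..d}. restrict f {1..d} v = l} = {v\<in>{1..d}. f v = l}" for l by auto
      then show ?thesis unfolding xcol_def by simp
    qed
    show "m \<in> (\<lambda>\<phi>. xcol {1..d} k \<phi>) ` ({1..d} \<rightarrow>\<^sub>E {1..k})"
      by (rule rev_image_eqI[OF r1]) (simp only: r2 f(2))
  qed
  moreover have "finite ({1..d::nat} \<rightarrow>\<^sub>E {1..k::nat})" by (rule finite_PiE) auto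
  ultimately show ?thesis using finite_subset by blast
qed

lemma kequiv_refl: "kempe_equiv d E k g g"
  unfolding kempe_equiv_def by (intro exI[of _ id] exI[of _ g]) (simp add: permutes_id)

lemma kequiv_pre: "(kempe_step d E k)\<^sup>*\<^sup>* h f \<Longrightarrow> kempe_equiv d E k f g \<Longrightarrow> kempe_equiv d E k h g"
  unfolding kempe_equiv_def by (meson rtranclp_trans)

lemma Mnot:
  assumes "S \<inter> T \<noteq> {}"
  shows "w + Poly_Mapping.single S 1 + Poly_Mapping.single T 1 \<notin> Xset d E k g"
proof
  assume "w + Poly_Mapping.single S 1 + Poly_Mapping.single T 1 \<in> Xset d E k g"
  then obtain f where "xcol {1..d} k f = w + Poly_Mapping.single S 1 + Poly_Mapping.single T 1"
    unfolding Xset_def by auto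
  from two_classes[OF this] obtain l1 l2 where "l1 \<noteq> l2" "cls d f l1 = S" "cls d f l2 = T" by blast
  then show False using cls_disj[of l1 l2 d f] assms by simp
qed

lemma Jinv:
  assumes sg: "simple_graph d E"
    and W: "W \<subseteq> {1..d}" and ca: "is_coloring E W 2 a" and cb: "is_coloring E W 2 b"
    and X: "u + xcol W 2 a \<in> Xset d E k g"
  shows "u + xcol W 2 b \<in> Xset d E k g"
proof -
  obtain f where cf: "is_coloring E {1..d} k f" and fx: "u + xcol W 2 a = xcol {1..d} k f"
    and fg: "kempe_equiv d E k f g"
    using X unfolding Xset_def by blast
  define A1 where "A1 = {v\<in>W. a v = 1}"
  define A2 where "A2 = {v\<in>W. a v = 2}"
  define B1 where "B1 = {v\<in>W. b v = 1}"
  define B2 where "B2 = {v\<in>W. b v = 2}"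
  have xa: "xcol W 2 a = Poly_Mapping.single A1 1 + Poly_Mapping.single A2 1"
    unfolding A1_def A2_def by (rule xcol2)
  have xb: "xcol W 2 b = Poly_Mapping.single B1 1 + Poly_Mapping.single B2 1"
    unfolding B1_def B2_def by (rule xcol2)
  have "xcol {1..d} k f = u + Poly_Mapping.single A1 1 + Poly_Mapping.single A2 1"
    using fx xa by (simp add: add.assoc)
  from two_classes[OF this] obtain i j where ij: "i \<in> {1..k}" "j \<in> {1..k}" "i \<noteq> j"
    and ci: "cls d f i = A1" and cj: "cls d f j = A2" by blast
  have aW: "a v = 1 \<or> a v = 2" if "v \<in> W" for v using ca that unfolding is_coloring_def by auto
  have bW: "b v = 1 \<or> b v = 2" if "v \<in> W" for v using cb that unfolding is_coloring_def by auto
  have Wf: "W = {v\<in>{1..d}. f v = i \<or> f v = j}"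
  proof (rule set_eqI)
    fix v
    show "v \<in> W \<longleftrightarrow> v \<in> {v\<in>{1..d}. f v = i \<or> f v = j}"
    proof
      assume "v \<in> W"
      then have "v \<in> A1 \<or> v \<in> A2" using aW unfolding A1_def A2_def by auto
      then show "v \<in> {v\<in>{1..d}. f v = i \<or> f v = j}" using ci cj unfolding cls_def by auto
    next
      assume "v \<in> {v\<in>{1..d}. f v = i \<or> f v = j}"
      then have "v \<in> cls d f i \<or> v \<in> cls d f j" unfolding cls_def by auto
      then show "v \<in> W" using ci cj unfolding A1_def A2_def by auto
    qed
  qed
  define h where "h = (\<lambda>v. if v \<in> W then (if b v = 1 then i else j) else f v)"
  have ch: "is_coloring E {1..d} k h"
    unfolding is_coloring_def
  proof (intro conjI ballI impI)
    fix v assume "v \<in> {1..d}"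
    then show "h v \<in> {1..k}" using cf ij unfolding h_def is_coloring_def by auto
  next
    fix x y assume xy: "x \<in> {1..d}" "y \<in> {1..d}" "{x, y} \<in> E"
    have fxy: "f x \<noteq> f y" using cf xy unfolding is_coloring_def by blast
    show "h x \<noteq> h y"
    proof (cases "x \<in> W")
      case True
      show ?thesis
      proof (cases "y \<in> W")
        case True
        have "b x \<noteq> b y" using cb \<open>x \<in> W\<close> True xy(3) unfolding is_coloring_def by blast
        then show ?thesis using bW[OF \<open>x \<in> W\<close>] bW[OF True] \<open>x \<in> W\<close> True ij(3) unfolding h_def by auto
      next
        case False
        then have "f y \<noteq> i" "f y \<noteq> j" using Wf xy(2) by auto
        then show ?thesis using \<open>x \<in> W\<close> False unfolding h_def by auto
      qed
    next
      case False
      show ?thesis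
      proof (cases "y \<in> W")
        case True
        have "f x \<noteq> i" "f x \<noteq> j" using Wf xy(1) False by auto
        then show ?thesis using True False unfolding h_def by auto
      next
        case False
        then show ?thesis using \<open>x \<notin> W\<close> fxy unfolding h_def by auto
      qed
    qed
  qed
  have out: "\<forall>v\<in>{1..d}. f v \<noteq> i \<and> f v \<noteq> j \<longrightarrow> h v = f v" using Wf unfolding h_def by auto
  have inn: "\<forall>v\<in>{1..d}. f v = i \<or> f v = j \<longrightarrow> h v = i \<or> h v = j" using Wf unfolding h_def by auto
  note ss = step_struct[OF ij out inn]
  define U where "U = (\<Sum>l\<in>{1..k}-{i,j}. Poly_Mapping.single (cls d f l) (1::nat))"
  have "u + Poly_Mapping.single A1 1 + Poly_Mapping.single A2 1 = U + Poly_Mapping.single A1 1 + Poly_Mapping.single A2 1"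
    using fx xa ss(1) ci cj unfolding U_def by (simp add: add.assoc)
  then have uU: "u = U" by simp
  have hi: "cls d h i = B1"
  proof (rule set_eqI)
    fix v show "v \<in> cls d h i \<longleftrightarrow> v \<in> B1"
      using Wf W bW ij(3) unfolding cls_def h_def B1_def by auto
  qed
  have hj: "cls d h j = B2"
  proof (rule set_eqI)
    fix v show "v \<in> cls d h j \<longleftrightarrow> v \<in> B2"
      using Wf W bW ij(3) unfolding cls_def h_def B2_def by auto
  qed
  have xh: "xcol {1..d} k h = u + xcol W 2 b"
    using ss(2) hi hj xb uU unfolding U_def by (simp add: add.assoc)
  have out2: "\<forall>v. \<not> (v \<in> {1..d} \<and> (h v = i \<or> h v = j)) \<longrightarrow> f v = h v"
  proof (intro allI impI)
    fix v assume nv: "\<not> (v \<in> {1..d} \<and> (h v = i \<or> h v = j))"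
    show "f v = h v"
    proof (cases "v \<in> W")
      case True
      then have "v \<in> {1..d}" "h v = i \<or> h v = j" using Wf unfolding h_def by auto
      then show ?thesis using nv by blast
    next
      case False then show ?thesis unfolding h_def by simp
    qed
  qed
  have inn2: "\<forall>v\<in>{1..d}. (h v = i \<or> h v = j) \<longrightarrow> (f v = i \<or> f v = j)"
    using Wf unfolding h_def by auto
  have "(kempe_step d E k)\<^sup>*\<^sup>* h f" by (rule chain'[OF ch cf ij out2 inn2])
  then have "kempe_equiv d E k h g" using fg by (rule kequiv_pre)
  then show ?thesis unfolding Xset_def using ch xh[symmetric] by blast
qed

lemma phi_gen_zero:
  assumes sg: "simple_graph d E" and bg: "b \<in> J_gens d E \<union> M_gens d E"
  shows "phi (Xset d E k g) (r * b) = (0::'k::field)"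
proof -
  let ?X = "Xset d E k g"
  have finX: "finite ?X" by (rule X_finite)
  have sz: "phi ?X (Poly_Mapping.single u s * b) = 0" for u s
  proof -
    from bg consider (J) W a a' where "W \<subseteq> {1..d}" "is_coloring E W 2 a" "is_coloring E W 2 a'"
        "b = mon (xcol W 2 a) - mon (xcol W 2 a')"
      | (M) S T where "S \<inter> T \<noteq> {}" "b = mon (Poly_Mapping.single S 1 + Poly_Mapping.single T 1)"
      unfolding J_gens_def M_gens_def by blast
    then show ?thesis
    proof cases
      case J
      have e: "Poly_Mapping.single u s * b = Poly_Mapping.single (u + xcol W 2 a) s - Poly_Mapping.single (u + xcol W 2 a') s"
        unfolding J(4) mon_def by (simp add: right_diff_distrib mult_single)
      have "(u + xcol W 2 a \<in> ?X) = (u + xcol W 2 a' \<in> ?X)"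
        using Jinv[OF sg J(1) J(2) J(3)] Jinv[OF sg J(1) J(3) J(2)] by blast
      then show ?thesis unfolding e phi_diff phi_single[OF finX] by simp
    next
      case M
      have e: "Poly_Mapping.single u s * b = Poly_Mapping.single (u + Poly_Mapping.single S 1 + Poly_Mapping.single T 1) s"
        unfolding M(2) mon_def by (simp add: mult_single add.assoc)
      have "u + Poly_Mapping.single S 1 + Poly_Mapping.single T 1 \<notin> ?X" by (rule Mnot[OF M(1)])
      then show ?thesis unfolding e phi_single[OF finX] by simp
    qed
  qed
  have e0: "(\<Sum>u\<in>Poly_Mapping.keys r. Poly_Mapping.single u (Poly_Mapping.lookup r u)) = r"
    by (rule pm_sum_single[symmetric])
  have "r * b = (\<Sum>u\<in>Poly_Mapping.keys r. Poly_Mapping.single u (Poly_Mapping.lookup r u)) * b"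
    by (simp only: e0)
  also have "\<dots> = (\<Sum>u\<in>Poly_Mapping.keys r. Poly_Mapping.single u (Poly_Mapping.lookup r u) * b)"
    by (rule sum_distrib_right)
  finally have "phi ?X (r * b) = (\<Sum>u\<in>Poly_Mapping.keys r. phi ?X (Poly_Mapping.single u (Poly_Mapping.lookup r u) * b))"
    by (simp add: phi_sum)
  also have "\<dots> = 0" using sz by simp
  finally show ?thesis .
qed

lemma phi_ideal_zero:
  assumes sg: "simple_graph d E" and p: "p \<in> (kempe_ideal d E :: 'k::field mpoly set)"
  shows "phi (Xset d E k g) (c * p) = 0"
proof -
  obtain A cc where A: "finite A" "A \<subseteq> J_gens d E \<union> M_gens d E" "p = (\<Sum>b\<in>A. cc b * b)"
    using p unfolding kempe_ideal_def ideal_gen_def by blast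
  have "c * p = (\<Sum>b\<in>A. (c * cc b) * b)" unfolding A(3) by (simp add: sum_distrib_left mult.assoc)
  then have "phi (Xset d E k g) (c * p) = (\<Sum>b\<in>A. phi (Xset d E k g) ((c * cc b) * b))"
    by (simp add: phi_sum)
  also have "\<dots> = 0" using phi_gen_zero[OF sg] A(2) by (intro sum.neutral) blast
  finally show ?thesis .
qed

lemma gens_RG:
  assumes sg: "simple_graph d E"
  shows "(J_gens d E \<union> M_gens d E :: 'k::field mpoly set) \<subseteq> RG d E"
proof
  fix b :: "'k mpoly" assume "b \<in> J_gens d E \<union> M_gens d E"
  then consider (J) W a a' where "W \<subseteq> {1..d}" "is_coloring E W 2 a" "is_coloring E W 2 a'"
        "b = mon (xcol W 2 a) - mon (xcol W 2 a')"
      | (M) S T where "S \<in> stable_sets d E" "T \<in> stable_sets d E" "b = mon (Poly_Mapping.single S 1 + Poly_Mapping.single T 1)"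
      unfolding J_gens_def M_gens_def by blast
  then show "b \<in> RG d E"
  proof cases
    case J
    have "mon (xcol W 2 a) \<in> (RG d E :: 'k mpoly set)" by (rule RG_mon[OF xcolW_Mon[OF sg J(1,2)]])
    moreover have "mon (xcol W 2 a') \<in> (RG d E :: 'k mpoly set)" by (rule RG_mon[OF xcolW_Mon[OF sg J(1,3)]])
    ultimately show ?thesis unfolding J(4) using RG_add RG_uminus by (metis diff_conv_add_uminus)
  next
    case M
    have "Poly_Mapping.single S 1 + Poly_Mapping.single T (1::nat) \<in> monomials_RG d E"
      using M(1,2) keys_add[of "Poly_Mapping.single S (1::nat)" "Poly_Mapping.single T 1"]
      unfolding monomials_RG_def by auto
    then show ?thesis unfolding M(3) by (rule RG_mon)
  qed
qed

lemma K_RG: "simple_graph d E \<Longrightarrow> p \<in> (kempe_ideal d E :: 'k::field mpoly set) \<Longrightarrow> p \<in> RG d E"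
  unfolding kempe_ideal_def by (rule ideal_sub_RG[OF gens_RG])

lemma monom_degree_sup:
  assumes "finite F" "Poly_Mapping.keys m \<subseteq> F"
  shows "monom_degree m = (\<Sum>S\<in>F. Poly_Mapping.lookup m S)"
  unfolding monom_degree_def
  by (rule sum.mono_neutral_left[OF assms(1,2)]) (simp add: in_keys_iff)

lemma monom_degree_add: "monom_degree (a + b) = monom_degree a + monom_degree b"
proof -
  let ?F = "Poly_Mapping.keys a \<union> Poly_Mapping.keys b"
  have "monom_degree (a + b) = (\<Sum>S\<in>?F. Poly_Mapping.lookup (a + b) S)"
    by (rule monom_degree_sup) (use keys_add[of a b] in auto)
  also have "\<dots> = (\<Sum>S\<in>?F. Poly_Mapping.lookup a S) + (\<Sum>S\<in>?F. Poly_Mapping.lookup b S)"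
    by (simp add: lookup_add sum.distrib)
  also have "\<dots> = monom_degree a + monom_degree b"
    using monom_degree_sup[of ?F a] monom_degree_sup[of ?F b] by simp
  finally show ?thesis .
qed

lemma monom_degree_single: "monom_degree (Poly_Mapping.single S c) = c"
  unfolding monom_degree_def by simp

lemma monom_degree_sum: "finite L \<Longrightarrow> monom_degree (\<Sum>l\<in>L. Poly_Mapping.single (Z l) (1::nat)) = card L"
proof (induction L rule: finite_induct)
  case empty then show ?case unfolding monom_degree_def by simp
next
  case (insert x L)
  then show ?case by (simp add: monom_degree_add monom_degree_single)
qed

lemma xcol_degree: "monom_degree (xcol {1..d} k f) = k"
  unfolding xcol_cls using monom_degree_sum[of "{1..k}" "cls d f"] by simp

lemma claimB:
  assumes sg: "simple_graph d E" and m: "m \<in> Xset d E k g"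
  shows "mon m - mon (xcol {1..d} k g) \<in> (kempe_ideal d E :: 'k::field mpoly set)"
proof -
  obtain f where cf: "is_coloring E {1..d} k f" and mf: "m = xcol {1..d} k f" and fg: "kempe_equiv d E k f g"
    using m unfolding Xset_def by blast
  obtain \<sigma> h0 where \<sigma>: "\<sigma> permutes {1..k}" and st: "(kempe_step d E k)\<^sup>*\<^sup>* f h0"
    and h0: "\<forall>v\<in>{1..d}. h0 v = \<sigma> (g v)"
    using fg unfolding kempe_equiv_def by blast
  have "mon (xcol {1..d} k f) - mon (xcol {1..d} k h0) \<in> (kempe_ideal d E :: 'k mpoly set)"
    using ksteps_K[OF sg st cf] by blast
  moreover have "xcol {1..d} k h0 = xcol {1..d} k g" by (rule xcol_perm[OF \<sigma> h0])
  ultimately show ?thesis using mf by simp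
qed

lemma claimA:
  assumes sg: "simple_graph d E" and mo: "monomial_order (monomials_RG d E) lt"
    and m0X: "m0 \<in> Xset d E k g" and XM: "Xset d E k g \<subseteq> monomials_RG d E"
    and min: "\<forall>m'\<in>Xset d E k g. m' \<noteq> m0 \<longrightarrow> lt m0 m'"
  shows "(mon m0 :: 'k::field mpoly) \<notin> initial_ideal d E lt (kempe_ideal d E :: 'k mpoly set)"
proof
  let ?X = "Xset d E k g"
  let ?K = "kempe_ideal d E :: 'k mpoly set"
  let ?Mon = "monomials_RG d E"
  assume "(mon m0 :: 'k mpoly) \<in> initial_ideal d E lt ?K"
  then obtain A c where A: "finite A" "A \<subseteq> {mon (lead_monom lt p) | p. p \<in> ?K \<and> p \<noteq> 0}"
    "\<forall>b\<in>A. c b \<in> RG d E" "(mon m0 :: 'k mpoly) = (\<Sum>b\<in>A. c b * b)"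
    unfolding initial_ideal_def ideal_gen_def by blast
  have s1: "(\<Sum>b\<in>A. Poly_Mapping.lookup (c b * b) m0) = 1"
    using arg_cong[OF A(4), of "\<lambda>q. Poly_Mapping.lookup q m0"] by (simp add: lookup_sum mon_def)
  have "\<exists>b\<in>A. Poly_Mapping.lookup (c b * b) m0 \<noteq> 0"
  proof (rule ccontr)
    assume "\<not> (\<exists>b\<in>A. Poly_Mapping.lookup (c b * b) m0 \<noteq> 0)"
    then have "(\<Sum>b\<in>A. Poly_Mapping.lookup (c b * b) m0) = 0" by (intro sum.neutral) blast
    then show False using s1 by simp
  qed
  then obtain b where b: "b \<in> A" "Poly_Mapping.lookup (c b * b) m0 \<noteq> 0" by blast
  obtain p where p: "b = mon (lead_monom lt p)" "p \<in> ?K" "p \<noteq> 0" using A(2) b(1) by blast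
  define L where "L = lead_monom lt p"
  have "m0 \<in> Poly_Mapping.keys (c b * Poly_Mapping.single L 1)" using b(2) p(1) unfolding mon_def L_def by (simp add: in_keys_iff)
  then obtain u where u: "u \<in> Poly_Mapping.keys (c b)" "m0 = u + L"
    using keys_mult[of "c b" "Poly_Mapping.single L 1"] by auto
  have uM: "u \<in> ?Mon" using A(3) b(1) u(1) unfolding RG_def by blast
  have pM: "Poly_Mapping.keys p \<subseteq> ?Mon" using K_RG[OF sg p(2)] unfolding RG_def by blast
  have LP: "L \<in> Poly_Mapping.keys p" "\<forall>m'\<in>Poly_Mapping.keys p. m' \<noteq> L \<longrightarrow> lt m' L"
    using lead_props[OF mo pM p(3)] unfolding L_def by auto
  have LM: "L \<in> ?Mon" using LP pM by blast
  have m0M: "m0 \<in> ?Mon" using m0X XM by blast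
  define q where "q = Poly_Mapping.single u 1 * p"
  have phi0: "phi ?X q = 0" unfolding q_def by (rule phi_ideal_zero[OF sg p(2)])
  have zero: "Poly_Mapping.lookup q m = 0" if mm: "m \<in> ?X - {m0}" for m
  proof (rule ccontr)
    assume "Poly_Mapping.lookup q m \<noteq> 0"
    then have "m \<in> Poly_Mapping.keys q" by (simp add: in_keys_iff)
    then obtain y where y: "y \<in> Poly_Mapping.keys p" "m = u + y" using keys_single_mult[of u p] unfolding q_def by blast
    have "y \<noteq> L" using y(2) u(2) mm by auto
    then have "lt y L" using LP y(1) by blast
    moreover have "y \<in> ?Mon" using y(1) pM by blast
    ultimately have "lt (y + u) (L + u)" using mo_props(4)[OF mo] LM uM by blast
    then have "lt m m0" using y(2) u(2) by (simp add: add.commute)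
    moreover have "lt m0 m" using min mm by blast
    moreover have "m \<in> ?Mon" using mm XM by blast
    ultimately have "lt m0 m0" using mo_props(2)[OF mo, of m0 m m0] m0M by blast
    then show False using mo_props(1)[OF mo] m0M by blast
  qed
  have "phi ?X q = Poly_Mapping.lookup q m0 + (\<Sum>m\<in>?X - {m0}. Poly_Mapping.lookup q m)"
    unfolding phi_def by (rule sum.remove[OF X_finite m0X])
  also have "(\<Sum>m\<in>?X - {m0}. Poly_Mapping.lookup q m) = 0" using zero by (intro sum.neutral) blast
  also have "Poly_Mapping.lookup q m0 = Poly_Mapping.lookup p L" unfolding u(2) q_def by (rule lookup_single_mult)
  finally have "Poly_Mapping.lookup p L = 0" using phi0 by simp
  then show False using LP(1) by (simp add: in_keys_iff)
qed

lemma part2: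
  fixes K :: "'k::field itself"
  assumes sg: "simple_graph d E" and mo: "monomial_order (monomials_RG d E) lt"
    and cg: "is_coloring E {1..d} k g"
  shows "\<exists>!m. m \<in> std_monomials K d E lt k \<and>
                  (\<exists>f. is_coloring E {1..d} k f \<and> m = xcol {1..d} k f \<and> kempe_equiv d E k f g)"
proof -
  let ?X = "Xset d E k g"
  let ?K = "kempe_ideal d E :: 'k mpoly set"
  have XM: "?X \<subseteq> monomials_RG d E" using xcol_Mon[OF sg] unfolding Xset_def by blast
  have gX: "xcol {1..d} k g \<in> ?X" unfolding Xset_def using cg kequiv_refl by blast
  obtain m0 where m0X: "m0 \<in> ?X" and min: "\<forall>m'\<in>?X. m' \<noteq> m0 \<longrightarrow> lt m0 m'"
    using mo_min[OF mo X_finite _ XM] gX by blast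
  have nA: "(mon m0 :: 'k mpoly) \<notin> initial_ideal d E lt ?K" by (rule claimA[OF sg mo m0X XM min])
  have deg: "monom_degree m0 = k" using m0X xcol_degree unfolding Xset_def by auto
  have std0: "m0 \<in> std_monomials K d E lt k"
    unfolding std_monomials_def using m0X XM deg nA by blast
  show ?thesis
  proof (rule ex1I[of _ m0])
    show "m0 \<in> std_monomials K d E lt k \<and> (\<exists>f. is_coloring E {1..d} k f \<and> m0 = xcol {1..d} k f \<and> kempe_equiv d E k f g)"
      using std0 m0X unfolding Xset_def by blast
  next
    fix m assume H: "m \<in> std_monomials K d E lt k \<and> (\<exists>f. is_coloring E {1..d} k f \<and> m = xcol {1..d} k f \<and> kempe_equiv d E k f g)"
    then have mX: "m \<in> ?X" unfolding Xset_def by blast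
    have mM: "m \<in> monomials_RG d E" using mX XM by blast
    have m0M: "m0 \<in> monomials_RG d E" using m0X XM by blast
    have nI: "(mon m :: 'k mpoly) \<notin> initial_ideal d E lt ?K" using H unfolding std_monomials_def by blast
    show "m = m0"
    proof (rule ccontr)
      assume ne: "m \<noteq> m0"
      then have lt: "lt m0 m" using min mX by blast
      define p where "p = (mon m - mon m0 :: 'k mpoly)"
      have "(mon m - mon (xcol {1..d} k g)) - (mon m0 - mon (xcol {1..d} k g)) \<in> ?K"
        unfolding kempe_ideal_def
        by (rule RG_ideal_diff) (use claimB[OF sg mX] claimB[OF sg m0X] in \<open>simp_all add: kempe_ideal_def\<close>)
      then have pK: "p \<in> ?K" unfolding p_def by simp
      have lk: "Poly_Mapping.lookup p z = (if z = m then 1 else if z = m0 then -1 else 0)" for z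
        unfolding p_def mon_def using ne by (simp add: lookup_minus lookup_single when_def)
      have keys: "Poly_Mapping.keys p = {m, m0}"
      proof (rule set_eqI)
        fix z show "z \<in> Poly_Mapping.keys p \<longleftrightarrow> z \<in> {m, m0}"
          unfolding in_keys_iff lk by (cases "z = m"; cases "z = m0") auto
      qed
      have pnz: "p \<noteq> 0" using lk[of m] by auto
      have L: "lead_monom lt p = m" by (rule lead_eq[OF mo]) (use keys mM m0M lt in auto)
      have "mon (lead_monom lt p) \<in> {mon (lead_monom lt p) | p. p \<in> ?K \<and> p \<noteq> 0}" using pK pnz by blast
      then have "1 * mon (lead_monom lt p) \<in> initial_ideal d E lt ?K"
        unfolding initial_ideal_def by (rule ideal_gen_mem) (rule RG_one)
      then have "(mon m :: 'k mpoly) \<in> initial_ideal d E lt ?K" using L by simp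
      then show False using nI by simp
    qed
  qed
qed

lemma empty_stable: "simple_graph d E \<Longrightarrow> {} \<in> stable_sets d E"
  unfolding stable_sets_def simple_graph_def by auto

lemma in_init_of_M:
  fixes K :: "'k::field itself"
  assumes sg: "simple_graph d E" and mo: "monomial_order (monomials_RG d E) lt"
    and S: "S \<in> stable_sets d E" "T \<in> stable_sets d E" "S \<inter> T \<noteq> {}"
    and w: "w \<in> monomials_RG d E"
  shows "(mon (w + (Poly_Mapping.single S 1 + Poly_Mapping.single T 1)) :: 'k mpoly)
           \<in> initial_ideal d E lt (kempe_ideal d E :: 'k mpoly set)"
proof -
  define x where "x = Poly_Mapping.single S 1 + Poly_Mapping.single T (1::nat)"
  have xM: "x \<in> monomials_RG d E"
    using S keys_add[of "Poly_Mapping.single S (1::nat)" "Poly_Mapping.single T 1"]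
    unfolding monomials_RG_def x_def by auto
  have gM: "(mon x :: 'k mpoly) \<in> M_gens d E" unfolding M_gens_def x_def using S by blast
  have gK: "(1 * mon x :: 'k mpoly) \<in> kempe_ideal d E"
    unfolding kempe_ideal_def by (rule ideal_gen_mem) (use gM RG_one in auto)
  have keys: "Poly_Mapping.keys (mon x :: 'k mpoly) = {x}" unfolding mon_def by simp
  have nz: "(mon x :: 'k mpoly) \<noteq> 0" using keys by auto
  have L: "lead_monom lt (mon x :: 'k mpoly) = x" by (rule lead_eq[OF mo]) (use keys xM in auto)
  have "(mon x :: 'k mpoly) \<in> {mon (lead_monom lt p) | p. p \<in> (kempe_ideal d E :: 'k mpoly set) \<and> p \<noteq> 0}"
    using gK nz L by force
  then have "mon w * (mon x :: 'k mpoly) \<in> initial_ideal d E lt (kempe_ideal d E :: 'k mpoly set)"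
    unfolding initial_ideal_def by (rule ideal_gen_mem) (rule RG_mon[OF w])
  then show ?thesis unfolding x_def mon_add_mult .
qed

lemma minus_add_le:
  fixes m x :: monom
  assumes "\<And>z. Poly_Mapping.lookup x z \<le> Poly_Mapping.lookup m z"
  shows "m = (m - x) + x"
  by (rule poly_mapping_eqI) (simp add: lookup_add lookup_minus assms)

lemma keys_minus_sub: "Poly_Mapping.keys ((m::monom) - x) \<subseteq> Poly_Mapping.keys m"
  by (auto simp: in_keys_iff lookup_minus)

lemma part1:
  fixes K :: "'k::field itself"
  assumes sg: "simple_graph d E" and mo: "monomial_order (monomials_RG d E) lt"
    and mstd: "m \<in> std_monomials K d E lt k"
  shows "\<exists>S::nat \<Rightarrow> nat set. (\<forall>l\<in>{1..k}. S l \<in> stable_sets d E) \<and>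
              (\<forall>l\<in>{1..k}. \<forall>l'\<in>{1..k}. l \<noteq> l' \<longrightarrow> S l \<inter> S l' = {}) \<and>
              m = (\<Sum>l\<in>{1..k}. Poly_Mapping.single (S l) 1) \<and>
              m = xcol (\<Union>l\<in>{1..k}. S l) k (\<lambda>v. SOME l. l \<in> {1..k} \<and> v \<in> S l) \<and>
              is_coloring E (\<Union>l\<in>{1..k}. S l) k (\<lambda>v. SOME l. l \<in> {1..k} \<and> v \<in> S l)"
proof -
  have mM: "m \<in> monomials_RG d E" and deg: "monom_degree m = k"
    and nI: "(mon m :: 'k mpoly) \<notin> initial_ideal d E lt (kempe_ideal d E :: 'k mpoly set)"
    using mstd unfolding std_monomials_def by auto
  have keysS: "Poly_Mapping.keys m \<subseteq> stable_sets d E" using mM unfolding monomials_RG_def by simp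
  have noMx: False if ST: "S \<in> Poly_Mapping.keys m" "T \<in> Poly_Mapping.keys m" "S \<inter> T \<noteq> {}"
    and le: "\<And>z. Poly_Mapping.lookup (Poly_Mapping.single S 1 + Poly_Mapping.single T 1) z \<le> Poly_Mapping.lookup m z"
    for S T
  proof -
    define x where "x = Poly_Mapping.single S 1 + Poly_Mapping.single T (1::nat)"
    have e: "m = (m - x) + x" unfolding x_def by (rule minus_add_le) (rule le)
    have wM: "m - x \<in> monomials_RG d E" using keys_minus_sub[of m x] mM unfolding monomials_RG_def by blast
    have "(mon ((m - x) + x) :: 'k mpoly) \<in> initial_ideal d E lt (kempe_ideal d E :: 'k mpoly set)"
      unfolding x_def by (rule in_init_of_M[OF sg mo]) (use keysS ST wM[unfolded x_def] in auto)
    then show False using nI e by simp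
  qed
  have disj: "S \<inter> T = {}" if ST: "S \<in> Poly_Mapping.keys m" "T \<in> Poly_Mapping.keys m" "S \<noteq> T" for S T
  proof (rule ccontr)
    assume ne: "S \<inter> T \<noteq> {}"
    have "Poly_Mapping.lookup (Poly_Mapping.single S 1 + Poly_Mapping.single T 1) z \<le> Poly_Mapping.lookup m z" for z
      using ST by (auto simp: lookup_add lookup_single when_def in_keys_iff)
    then show False using noMx[OF ST(1,2) ne] by blast
  qed
  have one: "Poly_Mapping.lookup m S = 1" if S: "S \<in> Poly_Mapping.keys m" "S \<noteq> {}" for S
  proof (rule ccontr)
    assume "Poly_Mapping.lookup m S \<noteq> 1"
    moreover have "Poly_Mapping.lookup m S \<noteq> 0" using S(1) by (simp add: in_keys_iff)
    ultimately have two: "2 \<le> Poly_Mapping.lookup m S" by linarith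
    have "Poly_Mapping.lookup (Poly_Mapping.single S 1 + Poly_Mapping.single S 1) z \<le> Poly_Mapping.lookup m z" for z
      using two by (auto simp: lookup_add lookup_single when_def)
    then show False using noMx[OF S(1) S(1)] S(2) by auto
  qed
  define N where "N = Poly_Mapping.keys m - {{}}"
  define n where "n = card N"
  define c0 where "c0 = Poly_Mapping.lookup m {}"
  have finN: "finite N" unfolding N_def by simp
  have NK: "N \<subseteq> Poly_Mapping.keys m" unfolding N_def by auto
  have degk: "k = c0 + n"
  proof -
    have "monom_degree m = (\<Sum>S\<in>insert {} N. Poly_Mapping.lookup m S)"
      by (rule monom_degree_sup) (auto simp: N_def)
    also have "\<dots> = c0 + (\<Sum>S\<in>N. Poly_Mapping.lookup m S)"
      unfolding c0_def by (rule sum.insert[OF finN]) (simp add: N_def)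
    also have "(\<Sum>S\<in>N. Poly_Mapping.lookup m S) = (\<Sum>S\<in>N. 1)"
      using one by (intro sum.cong) (auto simp: N_def)
    finally show ?thesis using deg n_def by simp
  qed
  obtain e where e: "bij_betw e {1..n} N" using ex_bij_betw_nat_finite_1[OF finN] n_def by blast
  have eN: "e l \<in> N" if "l \<in> {1..n}" for l using e that bij_betwE by blast
  have einj: "inj_on e {1..n}" using e bij_betw_def by blast
  define S where "S l = (if l \<le> n then e l else {})" for l
  have Sst: "\<forall>l\<in>{1..k}. S l \<in> stable_sets d E"
  proof
    fix l assume l: "l \<in> {1..k}"
    show "S l \<in> stable_sets d E"
    proof (cases "l \<le> n")
      case True
      then have "e l \<in> N" using eN l by simp
      then show ?thesis using True NK keysS unfolding S_def by auto
    next
      case False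
      then show ?thesis unfolding S_def using empty_stable[OF sg] by simp
    qed
  qed
  have Sdisj: "\<forall>l\<in>{1..k}. \<forall>l'\<in>{1..k}. l \<noteq> l' \<longrightarrow> S l \<inter> S l' = {}"
  proof (intro ballI impI)
    fix l l' assume l: "l \<in> {1..k}" "l' \<in> {1..k}" "l \<noteq> l'"
    show "S l \<inter> S l' = {}"
    proof (cases "l \<le> n \<and> l' \<le> n")
      case True
      then have "e l \<noteq> e l'" using einj l inj_on_eq_iff[OF einj] by auto
      moreover have "e l \<in> Poly_Mapping.keys m" "e l' \<in> Poly_Mapping.keys m" using eN NK True l by auto
      ultimately show ?thesis using disj True unfolding S_def by simp
    next
      case False
      then show ?thesis unfolding S_def by auto
    qed
  qed
  have msum: "m = (\<Sum>l\<in>{1..k}. Poly_Mapping.single (S l) 1)"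
  proof (rule poly_mapping_eqI)
    fix T
    have a: "Poly_Mapping.lookup (\<Sum>l\<in>{1..k}. Poly_Mapping.single (S l) (1::nat)) T = card {l\<in>{1..k}. S l = T}"
      by (rule lookup_sum_single_card) simp
    have b: "card {l\<in>{1..k}. S l = T} = Poly_Mapping.lookup m T"
    proof (cases "T = {}")
      case True
      have "{l\<in>{1..k}. S l = T} = {n+1..k}"
      proof (rule set_eqI)
        fix l
        show "l \<in> {l\<in>{1..k}. S l = T} \<longleftrightarrow> l \<in> {n+1..k}"
        proof
          assume l: "l \<in> {l\<in>{1..k}. S l = T}"
          have "\<not> l \<le> n"
          proof
            assume ln: "l \<le> n"
            then have "l \<in> {1..n}" using l by simp
            then have "e l \<in> N" by (rule eN)
            moreover have "e l = {}" using ln l True unfolding S_def by simp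
            ultimately show False unfolding N_def by simp
          qed
          then show "l \<in> {n+1..k}" using l by simp
        next
          assume "l \<in> {n+1..k}"
          then show "l \<in> {l\<in>{1..k}. S l = T}" using True unfolding S_def by simp
        qed
      qed
      then show ?thesis using True degk c0_def by simp
    next
      case False
      show ?thesis
      proof (cases "T \<in> Poly_Mapping.keys m")
        case True
        then have TN: "T \<in> N" using False N_def by simp
        then obtain l0 where l0: "l0 \<in> {1..n}" "e l0 = T" using e unfolding bij_betw_def by auto
        have "{l\<in>{1..k}. S l = T} = {l0}"
        proof (rule set_eqI)
          fix l
          show "l \<in> {l\<in>{1..k}. S l = T} \<longleftrightarrow> l \<in> {l0}"
          proof
            assume l: "l \<in> {l\<in>{1..k}. S l = T}"
            then have "l \<le> n" using False unfolding S_def by (auto split: if_splits)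
            then have "l \<in> {1..n}" "e l = T" using l unfolding S_def by auto
            then show "l \<in> {l0}" using inj_on_eq_iff[OF einj] l0 by auto
          next
            assume "l \<in> {l0}"
            then show "l \<in> {l\<in>{1..k}. S l = T}" using l0 degk unfolding S_def by auto
          qed
        qed
        then show ?thesis using one[OF True False] by simp
      next
        case nk: False
        have "{l\<in>{1..k}. S l = T} = {}"
        proof (rule ccontr)
          assume "{l\<in>{1..k}. S l = T} \<noteq> {}"
          then obtain l where l: "l \<in> {1..k}" "S l = T" by blast
          then have "l \<le> n" using False unfolding S_def by (auto split: if_splits)
          then have "T \<in> N" using l eN unfolding S_def by auto
          then show False using nk NK by blast
        qed
        then show ?thesis using nk by (simp add: in_keys_iff)
      qed
    qed
    show "Poly_Mapping.lookup m T = Poly_Mapping.lookup (\<Sum>l\<in>{1..k}. Poly_Mapping.single (S l) 1) T"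
      using a b by simp
  qed
  define F where "F = (\<lambda>v. SOME l. l \<in> {1..k} \<and> v \<in> S l)"
  define W where "W = (\<Union>l\<in>{1..k}. S l)"
  have Fl: "F v = l" if l: "l \<in> {1..k}" "v \<in> S l" for v l
  proof -
    have "F v \<in> {1..k} \<and> v \<in> S (F v)" unfolding F_def by (rule someI[of _ l]) (use l in blast)
    then show ?thesis using Sdisj l by blast
  qed
  have clsF: "{v\<in>W. F v = l} = S l" if l: "l \<in> {1..k}" for l
  proof
    show "{v\<in>W. F v = l} \<subseteq> S l"
    proof
      fix v assume "v \<in> {v\<in>W. F v = l}"
      then obtain l' where "l' \<in> {1..k}" "v \<in> S l'" "F v = l" unfolding W_def by blast
      then show "v \<in> S l" using Fl by blast
    qed
    show "S l \<subseteq> {v\<in>W. F v = l}" using Fl l unfolding W_def by blast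
  qed
  have xc: "m = xcol W k F"
    unfolding xcol_def msum by (rule sum.cong[OF refl]) (simp add: clsF)
  have colF: "is_coloring E W k F"
    unfolding is_coloring_def
  proof (intro conjI ballI impI)
    fix v assume "v \<in> W"
    then obtain l where "l \<in> {1..k}" "v \<in> S l" unfolding W_def by blast
    then show "F v \<in> {1..k}" using Fl by simp
  next
    fix u v assume uv: "u \<in> W" "v \<in> W" "{u, v} \<in> E"
    show "F u \<noteq> F v"
    proof
      assume eq: "F u = F v"
      obtain l where l: "l \<in> {1..k}" "u \<in> S l" using uv(1) unfolding W_def by blast
      obtain l' where l': "l' \<in> {1..k}" "v \<in> S l'" using uv(2) unfolding W_def by blast
      have "l = l'" using Fl[OF l] Fl[OF l'] eq by simp
      then have "{u, v} \<subseteq> S l" using l l' by simp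
      moreover have "S l \<in> stable_sets d E" using Sst l(1) by blast
      ultimately show False using uv(3) unfolding stable_sets_def by blast
    qed
  qed
  show ?thesis
    by (rule exI[of _ S]) (use Sst Sdisj msum xc colF in \<open>simp add: W_def F_def\<close>)
qed

theorem theorem1p2:
  fixes d k :: nat and E :: "nat set set" and lt :: "monom \<Rightarrow> monom \<Rightarrow> bool"
    and K :: "'k::field itself"
  assumes "simple_graph d E" and "k \<ge> 1"
    and "monomial_order (monomials_RG d E) lt"
  shows "(\<forall>m\<in>std_monomials K d E lt k.
            \<exists>S::nat \<Rightarrow> nat set. (\<forall>l\<in>{1..k}. S l \<in> stable_sets d E) \<and>
              (\<forall>l\<in>{1..k}. \<forall>l'\<in>{1..k}. l \<noteq> l' \<longrightarrow> S l \<inter> S l' = {}) \<and>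
              m = (\<Sum>l\<in>{1..k}. Poly_Mapping.single (S l) 1) \<and>
              m = xcol (\<Union>l\<in>{1..k}. S l) k (\<lambda>v. SOME l. l \<in> {1..k} \<and> v \<in> S l) \<and>
              is_coloring E (\<Union>l\<in>{1..k}. S l) k (\<lambda>v. SOME l. l \<in> {1..k} \<and> v \<in> S l))
       \<and> (\<forall>g. is_coloring E {1..d} k g \<longrightarrow>
            (\<exists>!m. m \<in> std_monomials K d E lt k \<and>
                  (\<exists>f. is_coloring E {1..d} k f \<and> m = xcol {1..d} k f \<and> kempe_equiv d E k f g)))"
proof (intro conjI ballI allI impI)
  fix m assume "m \<in> std_monomials K d E lt k"
  then show "\<exists>S::nat \<Rightarrow> nat set. (\<forall>l\<in>{1..k}. S l \<in> stable_sets d E) \<and>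
              (\<forall>l\<in>{1..k}. \<forall>l'\<in>{1..k}. l \<noteq> l' \<longrightarrow> S l \<inter> S l' = {}) \<and>
              m = (\<Sum>l\<in>{1..k}. Poly_Mapping.single (S l) 1) \<and>
              m = xcol (\<Union>l\<in>{1..k}. S l) k (\<lambda>v. SOME l. l \<in> {1..k} \<and> v \<in> S l) \<and>
              is_coloring E (\<Union>l\<in>{1..k}. S l) k (\<lambda>v. SOME l. l \<in> {1..k} \<and> v \<in> S l)"
    by (rule part1[OF assms(1) assms(3)])
next
  fix g assume "is_coloring E {1..d} k g"
  then show "\<exists>!m. m \<in> std_monomials K d E lt k \<and>
                  (\<exists>f. is_coloring E {1..d} k f \<and> m = xcol {1..d} k f \<and> kempe_equiv d E k f g)"
    by (rule part2[OF assms(1) assms(3)])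
qed

end
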